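(* Let $n>3$ and let $A=[A_1,\ldots,A_n]$ be an $n\times n\times n$ ASHM, with $L=L(A)=1A_1+\cdots+nA_n$. Then none of the second row, the $(n-1)$-st row, the second column, and the $(n-1)$-st column of $L$ is constant.
   Context: An $n\times n$ alternating sign matrix (ASM) is an $n\times n$ matrix with entries in $\{0,1,-1\}$ such that in every row and column the nonzeros alternate in sign, beginning and ending with $+1$. An $n\times n\times n$ hypermatrix $A=[a_{ijk}]$ is written $A=[A_1,\ldots,A_n]$ with $A_k=[a_{ijk}]_{i,j}$; lines are obtained by fixing two of the three indices. $A$ is an ASHM if all entries lie in $\{0,\pm1\}$ and in every line the nonzeros alternate in sign beginning and ending with $+1$. A line of a matrix is constant if all its entries are equal. *)

theory Defs
  imports Main
begin

definition alt_sign_line :: "int list \<Rightarrow> bool" where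
  "alt_sign_line xs \<longleftrightarrow>
     (let ys = filter (\<lambda>x. x \<noteq> 0) xs in
        ys \<noteq> [] \<and> hd ys = 1 \<and> last ys = 1 \<and>
        (\<forall>i. Suc i < length ys \<longrightarrow> ys ! Suc i = - (ys ! i)))"

definition ASHM :: "nat \<Rightarrow> (nat \<Rightarrow> nat \<Rightarrow> nat \<Rightarrow> int) \<Rightarrow> bool" where
  "ASHM n A \<longleftrightarrow>
     (\<forall>i\<in>{1..n}. \<forall>j\<in>{1..n}. \<forall>k\<in>{1..n}. A i j k \<in> {-1, 0, 1}) \<and>
     (\<forall>j\<in>{1..n}. \<forall>k\<in>{1..n}. alt_sign_line (map (\<lambda>i. A i j k) [1..<n+1])) \<and>
     (\<forall>i\<in>{1..n}. \<forall>k\<in>{1..n}. alt_sign_line (map (\<lambda>j. A i j k) [1..<n+1])) \<and>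
     (\<forall>i\<in>{1..n}. \<forall>j\<in>{1..n}. alt_sign_line (map (\<lambda>k. A i j k) [1..<n+1]))"

definition Lmat :: "nat \<Rightarrow> (nat \<Rightarrow> nat \<Rightarrow> nat \<Rightarrow> int) \<Rightarrow> nat \<Rightarrow> nat \<Rightarrow> int" where
  "Lmat n A i j = (\<Sum>k=1..n. int k * A i j k)"

definition const_row :: "nat \<Rightarrow> (nat \<Rightarrow> nat \<Rightarrow> int) \<Rightarrow> nat \<Rightarrow> bool" where
  "const_row n M i \<longleftrightarrow> (\<forall>j\<in>{1..n}. \<forall>j'\<in>{1..n}. M i j = M i j')"

definition const_col :: "nat \<Rightarrow> (nat \<Rightarrow> nat \<Rightarrow> int) \<Rightarrow> nat \<Rightarrow> bool" where
  "const_col n M j \<longleftrightarrow> (\<forall>i\<in>{1..n}. \<forall>i'\<in>{1..n}. M i j = M i' j)"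

end

theory Submission
  imports Defs
begin

lemma alt_nth:
  assumes "ys \<noteq> []" "hd ys = (1::int)" "\<forall>i. Suc i < length ys \<longrightarrow> ys ! Suc i = - (ys ! i)"
  shows "i < length ys \<Longrightarrow> ys ! i = (if even i then 1 else -1)"
proof (induction i)
  case 0 then show ?case using assms by (simp add: hd_conv_nth)
next
  case (Suc i) then show ?case using assms(3) by auto
qed

lemma alt_take_sum:
  assumes "\<And>i. i < length ys \<Longrightarrow> ys ! i = (if even i then 1 else (-1::int))"
  shows "r \<le> length ys \<Longrightarrow> sum_list (take r ys) = (if even r then 0 else 1)"
proof (induction r)
  case 0 then show ?case by simp
next
  case (Suc r)
  then have "take (Suc r) ys = take r ys @ [ys ! r]" by (simp add: take_Suc_conv_app_nth)
  then show ?case using Suc assms[of r] by auto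
qed

lemma sum_list_filter_nz: "sum_list (filter (\<lambda>x. x \<noteq> 0) xs) = sum_list (xs::int list)"
  by (induction xs) auto

lemma filter_take_prefix:
  "filter P (take t xs) = take (length (filter P (take t xs))) (filter P xs)"
proof -
  have "filter P xs = filter P (take t xs) @ filter P (drop t xs)"
    by (metis append_take_drop_id filter_append)
  then show ?thesis by (metis append_eq_conv_conj)
qed

lemma alt_prefix:
  assumes "alt_sign_line xs"
  shows "sum_list (take t xs) \<in> {0,1}" and "sum_list xs = 1"
proof -
  define ys where "ys = filter (\<lambda>x. x \<noteq> 0) xs"
  have A: "ys \<noteq> []" "hd ys = 1" "last ys = 1" "\<forall>i. Suc i < length ys \<longrightarrow> ys ! Suc i = - (ys ! i)"
    using assms unfolding alt_sign_line_def ys_def Let_def by auto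
  have N: "\<And>i. i < length ys \<Longrightarrow> ys ! i = (if even i then 1 else -1)"
    using alt_nth[OF A(1,2,4)] by blast
  have "ys = filter (\<lambda>x. x \<noteq> 0) (take t xs) @ filter (\<lambda>x. x \<noteq> 0) (drop t xs)"
    unfolding ys_def by (metis append_take_drop_id filter_append)
  then have "length (filter (\<lambda>x. x \<noteq> 0) (take t xs)) \<le> length ys"
    by (metis le_add1 length_append)
  then have "sum_list (take (length (filter (\<lambda>x. x \<noteq> 0) (take t xs))) ys) \<in> {0,1}"
    using alt_take_sum[OF N] by simp
  moreover have "take (length (filter (\<lambda>x. x \<noteq> 0) (take t xs))) ys = filter (\<lambda>x. x \<noteq> 0) (take t xs)"
    unfolding ys_def using filter_take_prefix[of "\<lambda>x. x \<noteq> 0" t xs] by simp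
  ultimately show "sum_list (take t xs) \<in> {0,1}"
    by (simp add: sum_list_filter_nz)
  obtain m where m: "length ys = Suc m" using A(1) by (cases "length ys") auto
  have "ys ! m = 1" using A(1,3) m by (simp add: last_conv_nth)
  moreover have "ys ! m = (if even m then 1 else -1)" using N[of m] m by simp
  ultimately have "even m" by (auto split: if_splits)
  then have "odd (length ys)" using m by simp
  then have "sum_list (take (length ys) ys) = 1" using alt_take_sum[OF N, of "length ys"] by simp
  then show "sum_list xs = 1" by (simp add: ys_def sum_list_filter_nz)
qed

lemma take_map_upt: "t \<le> n \<Longrightarrow> sum_list (take t (map f [1..<n+1])) = (\<Sum>k=1..t. (f k::int))"
proof -
  assume "t \<le> n"
  then have "take t [1..<n+1] = [1..<1+t]" by (intro take_upt) simp
  then have "take t (map f [1..<n+1]) = map f [1..<t+1]" by (simp add: take_map)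
  moreover have "sum_list (map f [1..<t+1]) = sum f {1..t}"
    unfolding interv_sum_list_conv_sum_set_nat set_upt
    by (metis Suc_eq_plus1 atLeastLessThanSuc_atLeastAtMost)
  ultimately show ?thesis by simp
qed


definition goodl :: "nat \<Rightarrow> (nat \<Rightarrow> int) \<Rightarrow> bool" where
  "goodl n f \<longleftrightarrow> (\<forall>k. 1 \<le> k \<and> k \<le> n \<longrightarrow> f k \<in> {-1,0,1}) \<and>
     (\<exists>k. 1 \<le> k \<and> k \<le> n \<and> f k \<noteq> 0) \<and>
     (\<forall>k. 1 \<le> k \<and> k \<le> n \<and> f k = -1 \<longrightarrow> (\<exists>i. 1 \<le> i \<and> i < k \<and> f i = 1)) \<and>
     (\<forall>k. 1 \<le> k \<and> k \<le> n \<and> f k = -1 \<longrightarrow> (\<exists>l. k < l \<and> l \<le> n \<and> f l = 1)) \<and>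
     (\<forall>i j. 1 \<le> i \<and> i < j \<and> j \<le> n \<and> f i = 1 \<and> f j = 1 \<longrightarrow> (\<exists>l. i < l \<and> l < j \<and> f l = -1))"

lemma split_sum: "(a::nat) \<le> b \<Longrightarrow> (\<Sum>k=1..b. (f k::int)) = (\<Sum>k=1..a. f k) + (\<Sum>k\<in>{a<..b}. f k)"
proof (induction b)
  case 0 then show ?case by simp
next
  case (Suc b)
  show ?case
  proof (cases "a = Suc b")
    case True then show ?thesis by simp
  next
    case False
    then have "a \<le> b" using Suc by simp
    moreover have "{a<..Suc b} = insert (Suc b) {a<..b}" using \<open>a \<le> b\<close> by auto
    ultimately show ?thesis using Suc by (simp add: add.assoc)
  qed
qed

lemma sum_pos_ex: "(\<Sum>k\<in>A. (f k::int)) > 0 \<Longrightarrow> \<exists>k\<in>A. f k > 0"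
  by (metis not_less sum_nonpos)

lemma sum_neg_ex: "(\<Sum>k\<in>A. (f k::int)) < 0 \<Longrightarrow> \<exists>k\<in>A. f k < 0"
  by (metis not_less sum_nonneg)

lemma alt_goodl:
  assumes alt: "alt_sign_line (map f [1..<n+1])" and vals: "\<forall>k. 1 \<le> k \<and> k \<le> n \<longrightarrow> f k \<in> {-1,0,1}"
  shows "goodl n f"
proof -
  define S where "S t = (\<Sum>k=1..t. f k)" for t
  have S01: "S t \<in> {0,1}" if "t \<le> n" for t
    using alt_prefix(1)[OF alt, of t] take_map_upt[OF that, of f] by (simp add: S_def)
  have Sn: "S n = 1"
    using alt_prefix(2)[OF alt] take_map_upt[of n n f] by (simp add: S_def)
  have Ssuc: "S (Suc t) = S t + f (Suc t)" for t by (simp add: S_def)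
  have Ssplit: "S b = S a + (\<Sum>k\<in>{a<..b}. f k)" if "a \<le> b" for a b
    using split_sum[OF that] by (simp add: S_def)
  have pos1: "f k = 1" if "f k > 0" "1 \<le> k" "k \<le> n" for k using vals that by auto
  have neg1: "f k = -1" if "f k < 0" "1 \<le> k" "k \<le> n" for k using vals that by auto
  have ex: "\<exists>k. 1 \<le> k \<and> k \<le> n \<and> f k \<noteq> 0"
  proof (rule ccontr)
    assume "\<not> ?thesis"
    then have "S n = 0" unfolding S_def by (intro sum.neutral) auto
    with Sn show False by simp
  qed
  have before: "\<exists>i. 1 \<le> i \<and> i < k \<and> f i = 1" if hk: "1 \<le> k" "k \<le> n" "f k = -1" for k
  proof -
    obtain t where t: "k = Suc t" using hk by (cases k) auto
    have "S k = S t - 1" using Ssuc t that by simp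
    then have "S t = 1" using S01[of k] S01[of t] that t by auto
    then have "(\<Sum>i=1..t. f i) > 0" by (simp add: S_def)
    then obtain i where "i \<in> {1..t}" "f i > 0" using sum_pos_ex by blast
    then show ?thesis using pos1[of i] t that by auto
  qed
  have after: "\<exists>l. k < l \<and> l \<le> n \<and> f l = 1" if hk: "1 \<le> k" "k \<le> n" "f k = -1" for k
  proof -
    obtain t where t: "k = Suc t" using hk by (cases k) auto
    have "S k = S t - 1" using Ssuc t that by simp
    then have "S k = 0" using S01[of k] S01[of t] that t by auto
    then have "(\<Sum>i\<in>{k<..n}. f i) > 0" using Ssplit[of k n] Sn that by simp
    then obtain l where "l \<in> {k<..n}" "f l > 0" using sum_pos_ex by blast
    then show ?thesis using pos1[of l] that by auto
  qed
  have betw: "\<exists>l. i < l \<and> l < j \<and> f l = -1"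
    if hij: "1 \<le> i" "i < j" "j \<le> n" "f i = 1" "f j = 1" for i j
  proof -
    obtain t where t: "i = Suc t" using hij by (cases i) auto
    have "S i = S t + 1" using Ssuc t that by simp
    then have Si: "S i = 1" using S01[of i] S01[of t] that t by auto
    obtain u where u: "j = Suc u" using hij by (cases j) auto
    have "S j = S u + 1" using Ssuc u that by simp
    then have Su: "S u = 0" using S01[of j] S01[of u] that u by auto
    have "i \<le> u" using that u by simp
    then have "(\<Sum>l\<in>{i<..u}. f l) < 0" using Ssplit[of i u] Si Su by simp
    then obtain l where "l \<in> {i<..u}" "f l < 0" using sum_neg_ex by blast
    then show ?thesis using neg1[of l] that u by auto
  qed
  show ?thesis unfolding goodl_def using vals ex before after betw by blast
qed

lemma goodl_rev:
  assumes "goodl n f" shows "goodl n (\<lambda>k. f (n + 1 - k))"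
proof -
  have G1: "\<And>k. 1 \<le> k \<Longrightarrow> k \<le> n \<Longrightarrow> f k \<in> {-1,0,1}" using assms unfolding goodl_def by blast
  have G2: "\<exists>k. 1 \<le> k \<and> k \<le> n \<and> f k \<noteq> 0" using assms unfolding goodl_def by blast
  have G3: "\<And>k. 1 \<le> k \<Longrightarrow> k \<le> n \<Longrightarrow> f k = -1 \<Longrightarrow> \<exists>i. 1 \<le> i \<and> i < k \<and> f i = 1"
    using assms unfolding goodl_def by blast
  have G4: "\<And>k. 1 \<le> k \<Longrightarrow> k \<le> n \<Longrightarrow> f k = -1 \<Longrightarrow> \<exists>l. k < l \<and> l \<le> n \<and> f l = 1"
    using assms unfolding goodl_def by blast
  have G5: "\<And>i j. 1 \<le> i \<Longrightarrow> i < j \<Longrightarrow> j \<le> n \<Longrightarrow> f i = 1 \<Longrightarrow> f j = 1 \<Longrightarrow> \<exists>l. i < l \<and> l < j \<and> f l = -1"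
    using assms unfolding goodl_def by blast
  let ?g = "\<lambda>k. f (n + 1 - k)"
  have 1: "\<forall>k. 1 \<le> k \<and> k \<le> n \<longrightarrow> ?g k \<in> {-1,0,1}"
  proof (intro allI impI)
    fix k assume "1 \<le> k \<and> k \<le> n"
    then show "?g k \<in> {-1,0,1}" using G1[of "n + 1 - k"] by auto
  qed
  have 2: "\<exists>k. 1 \<le> k \<and> k \<le> n \<and> ?g k \<noteq> 0"
  proof -
    obtain k where "1 \<le> k" "k \<le> n" "f k \<noteq> 0" using G2 by blast
    then show ?thesis by (intro exI[of _ "n + 1 - k"]) auto
  qed
  have 3: "\<exists>i. 1 \<le> i \<and> i < k \<and> ?g i = 1" if h: "1 \<le> k" "k \<le> n" "?g k = -1" for k
  proof -
    have r: "1 \<le> n + 1 - k" "n + 1 - k \<le> n" using h by auto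
    obtain l where "n + 1 - k < l" "l \<le> n" "f l = 1" using G4[OF r] h(3) by auto
    then show ?thesis using h by (intro exI[of _ "n + 1 - l"]) auto
  qed
  have 4: "\<exists>l. k < l \<and> l \<le> n \<and> ?g l = 1" if h: "1 \<le> k" "k \<le> n" "?g k = -1" for k
  proof -
    have r: "1 \<le> n + 1 - k" "n + 1 - k \<le> n" using h by auto
    obtain l where "1 \<le> l" "l < n + 1 - k" "f l = 1" using G3[OF r] h(3) by auto
    then show ?thesis using h by (intro exI[of _ "n + 1 - l"]) auto
  qed
  have 5: "\<exists>l. i < l \<and> l < j \<and> ?g l = -1"
    if h: "1 \<le> i" "i < j" "j \<le> n" "?g i = 1" "?g j = 1" for i j
  proof -
    have r: "1 \<le> n + 1 - j" "n + 1 - j < n + 1 - i" "n + 1 - i \<le> n" using h by auto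
    obtain l where "n + 1 - j < l" "l < n + 1 - i" "f l = -1" using G5[OF r] h(4,5) by auto
    then show ?thesis using h by (intro exI[of _ "n + 1 - l"]) auto
  qed
  show ?thesis unfolding goodl_def using 1 2 3 4 5 by blast
qed

lemma gv: "goodl n f \<Longrightarrow> 1 \<le> k \<Longrightarrow> k \<le> n \<Longrightarrow> f k \<in> {-1,0,1}"
  unfolding goodl_def by blast
lemma gb: "goodl n f \<Longrightarrow> 1 \<le> k \<Longrightarrow> k \<le> n \<Longrightarrow> f k = -1 \<Longrightarrow> \<exists>i. 1 \<le> i \<and> i < k \<and> f i = 1"
  unfolding goodl_def by blast
lemma ga: "goodl n f \<Longrightarrow> 1 \<le> k \<Longrightarrow> k \<le> n \<Longrightarrow> f k = -1 \<Longrightarrow> \<exists>l. k < l \<and> l \<le> n \<and> f l = 1"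
  unfolding goodl_def by blast
lemma gm: "goodl n f \<Longrightarrow> 1 \<le> i \<Longrightarrow> i < j \<Longrightarrow> j \<le> n \<Longrightarrow> f i = 1 \<Longrightarrow> f j = 1 \<Longrightarrow> \<exists>l. i < l \<and> l < j \<and> f l = -1"
  unfolding goodl_def by blast
lemma g_first: "goodl n f \<Longrightarrow> 1 \<le> n \<Longrightarrow> f 1 \<noteq> -1"
  using gb[of n f 1] by auto
lemma g_last: "goodl n f \<Longrightarrow> 1 \<le> n \<Longrightarrow> f n \<noteq> -1"
  using ga[of n f n] by auto

lemma g_unique:
  assumes g: "goodl n f" and nn: "\<forall>k. 1 \<le> k \<and> k \<le> n \<longrightarrow> f k \<noteq> -1"
  shows "\<exists>p. 1 \<le> p \<and> p \<le> n \<and> f p = 1 \<and> (\<forall>k. 1 \<le> k \<and> k \<le> n \<and> k \<noteq> p \<longrightarrow> f k = 0)"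
proof -
  obtain p where p: "1 \<le> p" "p \<le> n" "f p \<noteq> 0" using g unfolding goodl_def by blast
  have fp: "f p = 1" using gv[OF g p(1,2)] p nn by auto
  have "f k = 0" if k: "1 \<le> k" "k \<le> n" "k \<noteq> p" for k
  proof (rule ccontr)
    assume "f k \<noteq> 0"
    then have fk: "f k = 1" using gv[OF g k(1,2)] k nn by auto
    show False
    proof (cases "k < p")
      case True
      then obtain l where "k < l" "l < p" "f l = -1" using gm[OF g k(1) True p(2) fk fp] by blast
      then show False using nn k p by auto
    next
      case False
      then have "p < k" using k by simp
      then obtain l where "p < l" "l < k" "f l = -1" using gm[OF g p(1) _ k(2) fp fk] by blast
      then show False using nn k p by auto
    qed
  qed
  then show ?thesis using p fp by blast
qed

lemma wsum:
  assumes "1 \<le> p" "p \<le> n" "f p = 1" "\<forall>k. 1 \<le> k \<and> k \<le> n \<and> k \<noteq> p \<longrightarrow> f k = 0"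
  shows "(\<Sum>k=1..n. int k * f k) = int p"
proof -
  have "(\<Sum>k=1..n. int k * f k) = (\<Sum>k\<in>{p}. int k * f k)"
    using assms by (intro sum.mono_neutral_right) auto
  then show ?thesis using assms by simp
qed

definition allgood :: "nat \<Rightarrow> (nat \<Rightarrow> nat \<Rightarrow> nat \<Rightarrow> int) \<Rightarrow> bool" where
  "allgood n A \<longleftrightarrow>
     (\<forall>j k. 1 \<le> j \<and> j \<le> n \<and> 1 \<le> k \<and> k \<le> n \<longrightarrow> goodl n (\<lambda>i. A i j k)) \<and>
     (\<forall>i k. 1 \<le> i \<and> i \<le> n \<and> 1 \<le> k \<and> k \<le> n \<longrightarrow> goodl n (\<lambda>j. A i j k)) \<and>
     (\<forall>i j. 1 \<le> i \<and> i \<le> n \<and> 1 \<le> j \<and> j \<le> n \<longrightarrow> goodl n (\<lambda>k. A i j k))"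

lemma ashm_allgood:
  assumes "ASHM n A" shows "allgood n A"
proof -
  have V: "\<And>i j k. 1 \<le> i \<Longrightarrow> i \<le> n \<Longrightarrow> 1 \<le> j \<Longrightarrow> j \<le> n \<Longrightarrow> 1 \<le> k \<Longrightarrow> k \<le> n \<Longrightarrow> A i j k \<in> {-1,0,1}"
    using assms unfolding ASHM_def by auto
  have 1: "goodl n (\<lambda>i. A i j k)" if "1 \<le> j" "j \<le> n" "1 \<le> k" "k \<le> n" for j k
    using assms that unfolding ASHM_def by (intro alt_goodl) (auto intro: V)
  have 2: "goodl n (\<lambda>j. A i j k)" if "1 \<le> i" "i \<le> n" "1 \<le> k" "k \<le> n" for i k
    using assms that unfolding ASHM_def by (intro alt_goodl) (auto intro: V)
  have 3: "goodl n (\<lambda>k. A i j k)" if "1 \<le> i" "i \<le> n" "1 \<le> j" "j \<le> n" for i j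
    using assms that unfolding ASHM_def by (intro alt_goodl) (auto intro: V)
  show ?thesis unfolding allgood_def using 1 2 3 by blast
qed

lemma allgood_revi:
  assumes "allgood n A" shows "allgood n (\<lambda>i j k. A (n + 1 - i) j k)"
proof -
  have "goodl n (\<lambda>i. A (n + 1 - i) j k)" if "1 \<le> j" "j \<le> n" "1 \<le> k" "k \<le> n" for j k
    using goodl_rev[of n "\<lambda>i. A i j k"] assms that unfolding allgood_def by auto
  moreover have "goodl n (\<lambda>j. A (n + 1 - i) j k)" if h: "1 \<le> i" "i \<le> n" "1 \<le> k" "k \<le> n" for i k
  proof -
    have "1 \<le> n + 1 - i" "n + 1 - i \<le> n" using h by auto
    then show ?thesis using assms h unfolding allgood_def by blast
  qed
  moreover have "goodl n (\<lambda>k. A (n + 1 - i) j k)" if h: "1 \<le> i" "i \<le> n" "1 \<le> j" "j \<le> n" for i j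
  proof -
    have "1 \<le> n + 1 - i" "n + 1 - i \<le> n" using h by auto
    then show ?thesis using assms h unfolding allgood_def by blast
  qed
  ultimately show ?thesis unfolding allgood_def by auto
qed

lemma allgood_swap:
  assumes "allgood n A" shows "allgood n (\<lambda>i j k. A j i k)"
  using assms unfolding allgood_def by auto

lemma ex12: "\<exists>i::nat. 1 \<le> i \<and> i < 2 \<and> P i \<Longrightarrow> P 1"
proof -
  assume "\<exists>i::nat. 1 \<le> i \<and> i < 2 \<and> P i"
  then obtain i :: nat where i: "1 \<le> i" "i < 2" "P i" by blast
  then have "i = 1" by simp
  with i show ?thesis by simp
qed

lemma exn: "\<exists>l::nat. n - 1 < l \<and> l \<le> n \<and> P l \<Longrightarrow> P n"
proof -
  assume "\<exists>l::nat. n - 1 < l \<and> l \<le> n \<and> P l"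
  then obtain l :: nat where l: "n - 1 < l" "l \<le> n" "P l" by blast
  then have "l = n" by simp
  with l show ?thesis by simp
qed

lemma core:
  assumes n3: "n > 3" and AG: "allgood n A"
  shows "\<not> const_row n (Lmat n A) 2"
proof
  assume C: "const_row n (Lmat n A) 2"
  have I: "\<And>j k. 1 \<le> j \<Longrightarrow> j \<le> n \<Longrightarrow> 1 \<le> k \<Longrightarrow> k \<le> n \<Longrightarrow> goodl n (\<lambda>i. A i j k)"
    using AG unfolding allgood_def by simp
  have J: "\<And>i k. 1 \<le> i \<Longrightarrow> i \<le> n \<Longrightarrow> 1 \<le> k \<Longrightarrow> k \<le> n \<Longrightarrow> goodl n (\<lambda>j. A i j k)"
    using AG unfolding allgood_def by simp
  have K: "\<And>i j. 1 \<le> i \<Longrightarrow> i \<le> n \<Longrightarrow> 1 \<le> j \<Longrightarrow> j \<le> n \<Longrightarrow> goodl n (\<lambda>k. A i j k)"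
    using AG unfolding allgood_def by simp
  have n1: "1 \<le> n" "2 \<le> n" "1 \<le> n - 1" "n - 1 \<le> n" "2 < n - 1" using n3 by auto
  have CC: "Lmat n A 2 j = Lmat n A 2 j'" if "1 \<le> j" "j \<le> n" "1 \<le> j'" "j' \<le> n" for j j'
  proof -
    have "j \<in> {1..n}" "j' \<in> {1..n}" using that by auto
    then show ?thesis using C unfolding const_row_def by blast
  qed
  have J2: "goodl n (\<lambda>j. A 2 j k)" if "1 \<le> k" "k \<le> n" for k
    using J[of 2 k] that n1 by simp
  have J1: "goodl n (\<lambda>j. A 1 j k)" if "1 \<le> k" "k \<le> n" for k
    using J[of 1 k] that n1 by simp
  have r1: "\<forall>k. 1 \<le> k \<and> k \<le> n \<longrightarrow> A 2 1 k \<noteq> -1"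
  proof (intro allI impI)
    fix k assume "1 \<le> k \<and> k \<le> n"
    then have "goodl n (\<lambda>j. A 2 j k)" using J2 by simp
    from g_first[OF this n1(1)] show "A 2 1 k \<noteq> -1" by simp
  qed
  have K21: "goodl n (\<lambda>k. A 2 1 k)" using K[of 2 1] n1 by simp
  obtain p where p: "1 \<le> p" "p \<le> n" "A 2 1 p = 1" "\<forall>k. 1 \<le> k \<and> k \<le> n \<and> k \<noteq> p \<longrightarrow> A 2 1 k = 0"
    using g_unique[OF K21 r1] by blast
  have Lp: "Lmat n A 2 1 = int p" unfolding Lmat_def using wsum[of p n "\<lambda>k. A 2 1 k"] p by simp
  have rn: "\<forall>k. 1 \<le> k \<and> k \<le> n \<longrightarrow> A 2 n k \<noteq> -1"
  proof (intro allI impI)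
    fix k assume "1 \<le> k \<and> k \<le> n"
    then have "goodl n (\<lambda>j. A 2 j k)" using J2 by simp
    from g_last[OF this n1(1)] show "A 2 n k \<noteq> -1" by simp
  qed
  have K2n: "goodl n (\<lambda>k. A 2 n k)" using K[of 2 n] n1 by simp
  obtain q where q: "1 \<le> q" "q \<le> n" "A 2 n q = 1" "\<forall>k. 1 \<le> k \<and> k \<le> n \<and> k \<noteq> q \<longrightarrow> A 2 n k = 0"
    using g_unique[OF K2n rn] by blast
  have Lq: "Lmat n A 2 n = int q" unfolding Lmat_def using wsum[of q n "\<lambda>k. A 2 n k"] q by simp
  have pq: "p = q" using CC[of 1 n] Lp Lq n1 by simp
  have a: "A 2 2 p = -1"
  proof (cases "\<exists>k. 1 \<le> k \<and> k \<le> n \<and> A 2 2 k = -1")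
    case True
    then obtain k where k: "1 \<le> k" "k \<le> n" "A 2 2 k = -1" by blast
    have "\<exists>i. 1 \<le> i \<and> i < 2 \<and> A 2 i k = 1"
      using gb[OF J2[OF k(1,2)], of 2] k(3) n1 by simp
    then have "A 2 1 k = 1" by (rule ex12)
    then have "k = p" using p k by force
    then show ?thesis using k by simp
  next
    case False
    then have nn: "\<forall>k. 1 \<le> k \<and> k \<le> n \<longrightarrow> A 2 2 k \<noteq> -1" by blast
    have K22: "goodl n (\<lambda>k. A 2 2 k)" using K[of 2 2] n1 by simp
    obtain a where a: "1 \<le> a" "a \<le> n" "A 2 2 a = 1" "\<forall>k. 1 \<le> k \<and> k \<le> n \<and> k \<noteq> a \<longrightarrow> A 2 2 k = 0"
      using g_unique[OF K22 nn] by blast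
    have "Lmat n A 2 2 = int a" unfolding Lmat_def using wsum[of a n "\<lambda>k. A 2 2 k"] a by simp
    then have "a = p" using CC[of 2 1] Lp n1 by simp
    then have "\<exists>l. 1 < l \<and> l < 2 \<and> A 2 l p = -1"
      using gm[OF J2[OF p(1,2)], of 1 2] p a n1 by simp
    then show ?thesis by auto
  qed
  have b: "A 2 (n - 1) p = -1"
  proof (cases "\<exists>k. 1 \<le> k \<and> k \<le> n \<and> A 2 (n - 1) k = -1")
    case True
    then obtain k where k: "1 \<le> k" "k \<le> n" "A 2 (n - 1) k = -1" by blast
    have "\<exists>l. n - 1 < l \<and> l \<le> n \<and> A 2 l k = 1"
      using ga[OF J2[OF k(1,2)], of "n - 1"] k(3) n1 by simp
    then have "A 2 n k = 1" by (rule exn)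
    then have "k = q" using q k by force
    then show ?thesis using k pq by simp
  next
    case False
    then have nn: "\<forall>k. 1 \<le> k \<and> k \<le> n \<longrightarrow> A 2 (n - 1) k \<noteq> -1" by blast
    have K2m: "goodl n (\<lambda>k. A 2 (n - 1) k)" using K[of 2 "n - 1"] n1 by simp
    obtain a where a: "1 \<le> a" "a \<le> n" "A 2 (n - 1) a = 1" "\<forall>k. 1 \<le> k \<and> k \<le> n \<and> k \<noteq> a \<longrightarrow> A 2 (n - 1) k = 0"
      using g_unique[OF K2m nn] by blast
    have "Lmat n A 2 (n - 1) = int a" unfolding Lmat_def using wsum[of a n "\<lambda>k. A 2 (n - 1) k"] a by simp
    then have "a = q" using CC[of "n - 1" n] Lq n1 by simp
    then have "\<exists>l. n - 1 < l \<and> l < n \<and> A 2 l q = -1"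
      using gm[OF J2[OF q(1,2)], of "n - 1" n] q a n1 by simp
    then show ?thesis by auto
  qed
  have I2: "goodl n (\<lambda>i. A i 2 p)" using I[of 2 p] p n1 by simp
  have "\<exists>i. 1 \<le> i \<and> i < 2 \<and> A i 2 p = 1" using gb[OF I2, of 2] a n1 by simp
  then have a1: "A 1 2 p = 1" by (rule ex12)
  have Im: "goodl n (\<lambda>i. A i (n - 1) p)" using I[of "n - 1" p] p n1 by simp
  have "\<exists>i. 1 \<le> i \<and> i < 2 \<and> A i (n - 1) p = 1" using gb[OF Im, of 2] b n1 by simp
  then have b1: "A 1 (n - 1) p = 1" by (rule ex12)
  have "\<exists>l. 2 < l \<and> l < n - 1 \<and> A 1 l p = -1"
    using gm[OF J1[OF p(1,2)], of 2 "n - 1"] a1 b1 n1 by simp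
  then obtain l where l: "2 < l" "l < n - 1" "A 1 l p = -1" by blast
  have Il: "goodl n (\<lambda>i. A i l p)" using I[of l p] p l n1 by simp
  have "A 1 l p \<noteq> -1" using g_first[OF Il n1(1)] by simp
  with l show False by simp
qed

lemma row_transfer:
  assumes "\<And>j. M' 2 j = M r j" and "const_row n M r"
  shows "const_row n M' 2"
  using assms unfolding const_row_def by metis

lemma col_transfer:
  assumes "\<And>j. M' 2 j = M j c" and "const_col n M c"
  shows "const_row n M' 2"
  using assms unfolding const_row_def const_col_def by metis

theorem mainTheorem7:
  fixes n :: nat and A :: "nat \<Rightarrow> nat \<Rightarrow> nat \<Rightarrow> int"
  assumes "n > 3" and "ASHM n A"
  shows "\<not> const_row n (Lmat n A) 2 \<and> \<not> const_row n (Lmat n A) (n - 1) \<and>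
         \<not> const_col n (Lmat n A) 2 \<and> \<not> const_col n (Lmat n A) (n - 1)"
proof -
  have AG: "allgood n A" using ashm_allgood[OF assms(2)] .
  have n2: "n + 1 - 2 = n - 1" by simp
  have r1: "\<not> const_row n (Lmat n A) 2" using core[OF assms(1) AG] .
  have r2: "\<not> const_row n (Lmat n A) (n - 1)"
  proof
    assume H: "const_row n (Lmat n A) (n - 1)"
    have "Lmat n (\<lambda>i j k. A (n + 1 - i) j k) 2 j = Lmat n A (n - 1) j" for j
      unfolding Lmat_def n2 by simp
    then have "const_row n (Lmat n (\<lambda>i j k. A (n + 1 - i) j k)) 2"
      using row_transfer H by metis
    then show False using core[OF assms(1) allgood_revi[OF AG]] by simp
  qed
  have c1: "\<not> const_col n (Lmat n A) 2"
  proof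
    assume H: "const_col n (Lmat n A) 2"
    have "Lmat n (\<lambda>i j k. A j i k) 2 j = Lmat n A j 2" for j
      unfolding Lmat_def by simp
    then have "const_row n (Lmat n (\<lambda>i j k. A j i k)) 2"
      using col_transfer H by metis
    then show False using core[OF assms(1) allgood_swap[OF AG]] by simp
  qed
  have c2: "\<not> const_col n (Lmat n A) (n - 1)"
  proof
    assume H: "const_col n (Lmat n A) (n - 1)"
    have "Lmat n (\<lambda>i j k. A j (n + 1 - i) k) 2 j = Lmat n A j (n - 1)" for j
      unfolding Lmat_def n2 by simp
    then have "const_row n (Lmat n (\<lambda>i j k. A j (n + 1 - i) k)) 2"
      using col_transfer H by metis
    moreover have "allgood n (\<lambda>i j k. A j (n + 1 - i) k)"
      using allgood_revi[OF allgood_swap[OF AG]] by simp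
    ultimately show False using core[OF assms(1)] by blast
  qed
  show ?thesis using r1 r2 c1 c2 by blast
qed

end
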